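(* Let $X$ be a compact metric space with metric $d$, let $L>0$, and let $f\colon X\to X$ be a continuous map with the $L$-Lipschitz shadowing property. Then $CR(f)$ is $f$-invariant and the restriction $f|_{CR(f)}\colon CR(f)\to CR(f)$ (with the restricted metric) also has the $L$-Lipschitz shadowing property.
   Context: For a continuous map $g\colon Y\to Y$ on a metric space $(Y,d)$ and $\delta>0$, a sequence $(x_i)_{i\ge0}$ in $Y$ is a $\delta$-pseudo orbit of $g$ if $d(g(x_i),x_{i+1})\le\delta$ for all $i\ge0$; it is $\epsilon$-shadowed by $y\in Y$ if $d(g^i(y),x_i)\le\epsilon$ for all $i\ge0$. $g$ has the $L$-Lipschitz shadowing property if there is $\delta_0>0$ such that for every $0<\delta\le\delta_0$, every $\delta$-pseudo orbit of $g$ is $L\delta$-shadowed by some point of $Y$. A $\delta$-chain of $f$ is a finite sequence $(x_i)_{i=0}^k$, $k\ge1$, with $d(f(x_i),x_{i+1})\le\delta$ for $0\le i\le k-1$; a $\delta$-cycle is one with $x_0=x_k$. $CR(f)$ is the set of $x\in X$ such that for every $\delta>0$ there is a $\delta$-cycle of $f$ with $x_0=x_k=x$. *)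

theory Defs
  imports "HOL-Analysis.Analysis"
begin

text \<open>A metric space (Y,d) is modelled as a subset Y of a metric_space type with the
restricted metric dist; a self map g of Y is a function g with g ` Y \<subseteq> Y.\<close>

definition pseudo_orbit :: "'a::metric_space set \<Rightarrow> ('a \<Rightarrow> 'a) \<Rightarrow> real \<Rightarrow> (nat \<Rightarrow> 'a) \<Rightarrow> bool" where
  "pseudo_orbit Y g \<delta> xs \<longleftrightarrow> (\<forall>i. xs i \<in> Y) \<and> (\<forall>i. dist (g (xs i)) (xs (Suc i)) \<le> \<delta>)"

definition shadows :: "'a::metric_space set \<Rightarrow> ('a \<Rightarrow> 'a) \<Rightarrow> real \<Rightarrow> (nat \<Rightarrow> 'a) \<Rightarrow> 'a \<Rightarrow> bool" where
  "shadows Y g \<epsilon> xs y \<longleftrightarrow> y \<in> Y \<and> (\<forall>i. dist ((g ^^ i) y) (xs i) \<le> \<epsilon>)"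

definition lipschitz_shadowing :: "'a::metric_space set \<Rightarrow> ('a \<Rightarrow> 'a) \<Rightarrow> real \<Rightarrow> bool" where
  "lipschitz_shadowing Y g L \<longleftrightarrow>
     (\<exists>\<delta>0>0. \<forall>\<delta>. 0 < \<delta> \<and> \<delta> \<le> \<delta>0 \<longrightarrow>
        (\<forall>xs. pseudo_orbit Y g \<delta> xs \<longrightarrow> (\<exists>y. shadows Y g (L * \<delta>) xs y)))"

definition delta_chain :: "'a::metric_space set \<Rightarrow> ('a \<Rightarrow> 'a) \<Rightarrow> real \<Rightarrow> (nat \<Rightarrow> 'a) \<Rightarrow> nat \<Rightarrow> bool" where
  "delta_chain X f \<delta> xs k \<longleftrightarrow> 1 \<le> k \<and> (\<forall>i\<le>k. xs i \<in> X) \<and> (\<forall>i<k. dist (f (xs i)) (xs (Suc i)) \<le> \<delta>)"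

definition chain_recurrent_set :: "'a::metric_space set \<Rightarrow> ('a \<Rightarrow> 'a) \<Rightarrow> 'a set" where
  "chain_recurrent_set X f = {x \<in> X. \<forall>\<delta>>0. \<exists>xs k. delta_chain X f \<delta> xs k \<and> xs 0 = x \<and> xs k = x}"

end

theory Submission
  imports Defs
begin

definition chainp :: "'a::metric_space set \<Rightarrow> ('a \<Rightarrow> 'a) \<Rightarrow> real \<Rightarrow> (nat \<Rightarrow> 'a) \<Rightarrow> nat \<Rightarrow> bool" where
  "chainp X f d xs k \<longleftrightarrow> (\<forall>i\<le>k. xs i \<in> X) \<and> (\<forall>i<k. dist (f (xs i)) (xs (Suc i)) \<le> d)"

lemma delta_chain_chainp: "delta_chain X f d xs k \<longleftrightarrow> 1 \<le> k \<and> chainp X f d xs k"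
  unfolding delta_chain_def chainp_def by auto

lemma chainp_append:
  assumes "chainp X f d xs k" "chainp X f d ys m" "xs k = ys 0"
  shows "chainp X f d (\<lambda>i. if i \<le> k then xs i else ys (i - k)) (k + m)"
  unfolding chainp_def
proof (intro conjI allI impI)
  fix i assume "i \<le> k + m"
  then show "(if i \<le> k then xs i else ys (i - k)) \<in> X"
    using assms unfolding chainp_def by auto
next
  fix i assume i: "i < k + m"
  show "dist (f (if i \<le> k then xs i else ys (i - k))) (if Suc i \<le> k then xs (Suc i) else ys (Suc i - k)) \<le> d"
  proof (cases "i < k")
    case True then show ?thesis using assms unfolding chainp_def by auto
  next
    case False
    then have "Suc i - k = Suc (i - k)" "i - k < m" using i by auto
    then show ?thesis using assms False unfolding chainp_def
      by (cases "i = k") auto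
  qed
qed

definition reach :: "'a::metric_space set \<Rightarrow> ('a \<Rightarrow> 'a) \<Rightarrow> real \<Rightarrow> 'a \<Rightarrow> 'a \<Rightarrow> bool" where
  "reach X f d a b \<longleftrightarrow> (\<exists>xs k. delta_chain X f d xs k \<and> xs 0 = a \<and> xs k = b)"

lemma reach_trans:
  assumes "reach X f d a b" "reach X f d b c" shows "reach X f d a c"
proof -
  obtain xs k where 1: "delta_chain X f d xs k" "xs 0 = a" "xs k = b" using assms(1) reach_def by metis
  obtain ys m where 2: "delta_chain X f d ys m" "ys 0 = b" "ys m = c" using assms(2) reach_def by metis
  define zs where "zs = (\<lambda>i. if i \<le> k then xs i else ys (i - k))"
  have "chainp X f d zs (k + m)" unfolding zs_def
    by (rule chainp_append) (use 1 2 in \<open>auto simp: delta_chain_chainp\<close>)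
  moreover have "1 \<le> k + m" using 1 by (auto simp: delta_chain_chainp)
  ultimately have "delta_chain X f d zs (k + m)"
    by (simp add: delta_chain_chainp)
  moreover have "zs 0 = a" using 1 by (simp add: zs_def)
  moreover have "zs (k + m) = c"
    using 1 2 by (cases "m = 0") (auto simp: delta_chain_chainp zs_def)
  ultimately show ?thesis unfolding reach_def by (intro exI[of _ zs] exI[of _ "k+m"]) simp
qed

lemma reach_mono: "reach X f d a b \<Longrightarrow> d \<le> e \<Longrightarrow> reach X f e a b"
proof -
  assume "reach X f d a b" "d \<le> e"
  then obtain xs k where "delta_chain X f d xs k" "xs 0 = a" "xs k = b" unfolding reach_def by blast
  then have "delta_chain X f e xs k" "xs 0 = a" "xs k = b" using \<open>d \<le> e\<close>
    unfolding delta_chain_def by (auto intro: order_trans)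
  then show ?thesis unfolding reach_def by blast
qed

lemma reach_step: "a \<in> X \<Longrightarrow> b \<in> X \<Longrightarrow> dist (f a) b \<le> d \<Longrightarrow> reach X f d a b"
proof -
  assume "a \<in> X" "b \<in> X" "dist (f a) b \<le> d"
  then have "delta_chain X f d (\<lambda>i. if i = 0 then a else b) 1"
    unfolding delta_chain_def by auto
  then show ?thesis unfolding reach_def
    by (intro exI[of _ "\<lambda>i. if i = 0 then a else b"] exI[of _ 1]) simp
qed

lemma CR_iff: "x \<in> chain_recurrent_set X f \<longleftrightarrow> x \<in> X \<and> (\<forall>d>0. reach X f d x x)"
  unfolding chain_recurrent_set_def reach_def by auto

lemma uc_le:
  assumes "compact X" "continuous_on X f" "e > 0"
  shows "\<exists>b>0. \<forall>u\<in>X. \<forall>v\<in>X. dist u v \<le> b \<longrightarrow> dist (f u) (f v) \<le> e"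
proof -
  have "uniformly_continuous_on X f" using assms compact_uniformly_continuous by blast
  then obtain d where d: "d > 0" "\<forall>x\<in>X. \<forall>x'\<in>X. dist x' x < d \<longrightarrow> dist (f x') (f x) < e"
    unfolding uniformly_continuous_on_def using assms(3) by metis
  show ?thesis
  proof (intro exI[of _ "d/2"] conjI ballI impI)
    fix u v assume uv: "u \<in> X" "v \<in> X" "dist u v \<le> d/2"
    then have "dist u v < d" using d(1) by linarith
    then show "dist (f u) (f v) \<le> e" using d(2) uv by (metis dist_commute less_imp_le)
  qed (use d in auto)
qed

lemma chain_close_ends:
  assumes "delta_chain X f g1 c k" "z \<in> X" "dist (c 0) z \<le> b" "dist (c k) z \<le> b"
    "\<forall>u\<in>X. \<forall>v\<in>X. dist u v \<le> b \<longrightarrow> dist (f u) (f v) \<le> g2" "0 \<le> b" "0 \<le> g2"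
  shows "delta_chain X f (g1+g2+b) (\<lambda>i. if i = 0 \<or> i = k then z else c i) k"
  unfolding delta_chain_def
proof (intro conjI allI impI)
  show "1 \<le> k" using assms(1) unfolding delta_chain_def by auto
next
  fix i assume "i \<le> k" then show "(if i = 0 \<or> i = k then z else c i) \<in> X"
    using assms unfolding delta_chain_def by auto
next
  fix i assume i: "i < k"
  let ?w = "\<lambda>i. if i = 0 \<or> i = k then z else c i"
  have ci: "c i \<in> X" "c (Suc i) \<in> X" using i assms(1) unfolding delta_chain_def by auto
  have a: "dist (f (?w i)) (f (c i)) \<le> g2"
  proof (cases "i = 0")
    case True then show ?thesis using assms(5) assms(2,3) ci i by (auto simp: dist_commute)
  next
    case False then show ?thesis using i assms(7) by auto
  qed
  have b: "dist (f (c i)) (c (Suc i)) \<le> g1" using assms(1) i unfolding delta_chain_def by auto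
  have c: "dist (c (Suc i)) (?w (Suc i)) \<le> b"
    using assms(4,6) i by auto
  have t1: "dist (f (?w i)) (?w (Suc i)) \<le> dist (f (?w i)) (f (c i)) + dist (f (c i)) (?w (Suc i))"
    by (rule dist_triangle)
  have t2: "dist (f (c i)) (?w (Suc i)) \<le> dist (f (c i)) (c (Suc i)) + dist (c (Suc i)) (?w (Suc i))"
    by (rule dist_triangle)
  have "dist (f (?w i)) (?w (Suc i)) \<le> dist (f (?w i)) (f (c i)) + dist (f (c i)) (c (Suc i)) + dist (c (Suc i)) (?w (Suc i))"
    using t1 t2 by linarith
  then show "dist (f (?w i)) (?w (Suc i)) \<le> g1 + g2 + b" using a b c by linarith
qed


lemma CR_crit:
  assumes "compact X" "continuous_on X f" "z \<in> X"
    and H: "\<And>g b. g > 0 \<Longrightarrow> b > 0 \<Longrightarrow> \<exists>c k. delta_chain X f g c k \<and> dist (c 0) z \<le> b \<and> dist (c k) z \<le> b"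
  shows "z \<in> chain_recurrent_set X f"
  unfolding CR_iff
proof (intro conjI allI impI)
  show "z \<in> X" by fact
  fix e :: real assume e: "e > 0"
  obtain b0 where b0: "b0 > 0" "\<forall>u\<in>X. \<forall>v\<in>X. dist u v \<le> b0 \<longrightarrow> dist (f u) (f v) \<le> e/3"
    using uc_le[OF assms(1,2), of "e/3"] e by auto
  define b where "b = min b0 (e/3)"
  have b: "b > 0" "b \<le> e/3" "\<forall>u\<in>X. \<forall>v\<in>X. dist u v \<le> b \<longrightarrow> dist (f u) (f v) \<le> e/3"
    using b0 e unfolding b_def by auto
  obtain c k where c: "delta_chain X f (e/3) c k" "dist (c 0) z \<le> b" "dist (c k) z \<le> b"
    using H[of "e/3" b] e b by auto
  have "delta_chain X f (e/3 + e/3 + b) (\<lambda>i. if i = 0 \<or> i = k then z else c i) k"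
    by (rule chain_close_ends) (use c b assms(3) e in auto)
  then have "delta_chain X f e (\<lambda>i. if i = 0 \<or> i = k then z else c i) k"
    unfolding delta_chain_def using b(2) by (auto intro: order_trans)
  then show "reach X f e z z" unfolding reach_def
    by (intro exI[of _ "\<lambda>i. if i = 0 \<or> i = k then z else c i"] exI[of _ k]) simp
qed

lemma funpow_in: "f ` X \<subseteq> X \<Longrightarrow> x \<in> X \<Longrightarrow> (f ^^ n) x \<in> X"
proof (induction n)
  case 0 then show ?case by simp
next
  case (Suc n) then show ?case by (simp add: image_subset_iff)
qed

lemma funpow_cont: "f ` X \<subseteq> X \<Longrightarrow> continuous_on X f \<Longrightarrow> continuous_on X (f ^^ n)"
proof (induction n)
  case 0 then show ?case by (simp add: continuous_on_id)
next
  case (Suc n)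
  have img: "(f ^^ n) ` X \<subseteq> X" using funpow_in[OF Suc.prems(1)] by auto
  have c1: "continuous_on X (f ^^ n)" using Suc.IH Suc.prems by simp
  have c2: "continuous_on ((f ^^ n) ` X) f" using continuous_on_subset[OF Suc.prems(2) img] .
  show ?case using continuous_on_compose[OF c1 c2] by simp
qed

lemma CR_sub: "chain_recurrent_set X f \<subseteq> X"
  unfolding chain_recurrent_set_def by auto

lemma CR_shift:
  assumes "compact X" "continuous_on X f" "f ` X \<subseteq> X" "x \<in> chain_recurrent_set X f" "g > 0"
  shows "reach X f g (f x) x"
proof -
  obtain b0 where b0: "b0 > 0" "\<forall>u\<in>X. \<forall>v\<in>X. dist u v \<le> b0 \<longrightarrow> dist (f u) (f v) \<le> g/2"
    using uc_le[OF assms(1,2), of "g/2"] assms(5) by auto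
  define b where "b = min b0 (g/2)"
  have b: "b > 0" "b \<le> g/2" "\<forall>u\<in>X. \<forall>v\<in>X. dist u v \<le> b \<longrightarrow> dist (f u) (f v) \<le> g/2"
    using b0 assms(5) unfolding b_def by auto
  have xX: "x \<in> X" using assms(4) CR_sub by auto
  have "reach X f b x x" using assms(4) b(1) CR_iff by blast
  then obtain c k where ck: "delta_chain X f b c k" "c 0 = x" "c k = x" unfolding reach_def by blast
  define e where "e = (\<lambda>i. if i \<le> k then c i else c (i - k))"
  have ech: "chainp X f b e (k + k)" unfolding e_def
    by (rule chainp_append) (use ck in \<open>auto simp: delta_chain_chainp\<close>)
  have k1: "1 \<le> k" using ck unfolding delta_chain_def by auto
  have e0: "e 0 = x" using ck by (simp add: e_def)
  have eK: "e (k + k) = x" using ck k1 by (simp add: e_def)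
  define w where "w = (\<lambda>i. if i = 0 then f x else e (Suc i))"
  have "delta_chain X f g w (k + k - 1)"
    unfolding delta_chain_def
  proof (intro conjI allI impI)
    show "1 \<le> k + k - 1" using k1 by simp
  next
    fix i assume "i \<le> k + k - 1"
    then show "w i \<in> X" using ech xX assms(3) unfolding w_def chainp_def by auto
  next
    fix i assume i: "i < k + k - 1"
    show "dist (f (w i)) (w (Suc i)) \<le> g"
    proof (cases "i = 0")
      case True
      have e1: "dist (f (e 0)) (e 1) \<le> b" using ech k1 unfolding chainp_def by auto
      have e12: "dist (f (e 1)) (e 2) \<le> b" 
      proof -
        have "1 < k + k" using k1 by simp
        then have "dist (f (e 1)) (e (Suc 1)) \<le> b" using ech unfolding chainp_def by blast
        then show ?thesis by (simp add: numeral_2_eq_2)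
      qed
      have eX: "e 1 \<in> X" using ech k1 unfolding chainp_def by auto
      have "dist (f (f x)) (f (e 1)) \<le> g/2" using b(3) e1 e0 eX xX assms(3) by auto
      then have "dist (f (f x)) (e 2) \<le> g" using e12 b(2) dist_triangle[of "f (f x)" "e 2" "f (e 1)"] by linarith
      then show ?thesis using True by (simp add: w_def numeral_2_eq_2)
    next
      case False
      have "dist (f (e (Suc i))) (e (Suc (Suc i))) \<le> b" using ech i unfolding chainp_def by auto
      moreover have "b \<le> g" using b(2) assms(5) by linarith
      ultimately show ?thesis using False by (simp add: w_def)
    qed
  qed
  moreover have "w 0 = f x" by (simp add: w_def)
  moreover have "w (k + k - 1) = x" using k1 eK by (simp add: w_def)
  ultimately show ?thesis unfolding reach_def by (intro exI[of _ w] exI[of _ "k + k - 1"]) simp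
qed

lemma CR_fwd:
  assumes "compact X" "continuous_on X f" "f ` X \<subseteq> X" "x \<in> chain_recurrent_set X f"
  shows "f x \<in> chain_recurrent_set X f"
  unfolding CR_iff
proof (intro conjI allI impI)
  have xX: "x \<in> X" using assms(4) CR_sub by auto
  then show "f x \<in> X" using assms(3) by auto
  fix e :: real assume e: "e > 0"
  obtain b where b: "b > 0" "\<forall>u\<in>X. \<forall>v\<in>X. dist u v \<le> b \<longrightarrow> dist (f u) (f v) \<le> e"
    using uc_le[OF assms(1,2) e] by auto
  obtain c k where ck: "delta_chain X f b c k" "c 0 = x" "c k = x"
    using assms(4) b(1) unfolding CR_iff reach_def by blast
  have "delta_chain X f e (\<lambda>i. f (c i)) k"
    unfolding delta_chain_def
  proof (intro conjI allI impI)
    show "1 \<le> k" using ck unfolding delta_chain_def by auto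
  next
    fix i assume "i \<le> k" then show "f (c i) \<in> X" using ck assms(3) unfolding delta_chain_def by auto
  next
    fix i assume i: "i < k"
    have "c i \<in> X" "c (Suc i) \<in> X" "dist (f (c i)) (c (Suc i)) \<le> b"
      using ck i unfolding delta_chain_def by auto
    then have "f (c i) \<in> X" using assms(3) by auto
    then show "dist (f (f (c i))) (f (c (Suc i))) \<le> e"
      using b(2) \<open>c (Suc i) \<in> X\<close> \<open>dist (f (c i)) (c (Suc i)) \<le> b\<close> by auto
  qed
  then show "reach X f e (f x) (f x)" unfolding reach_def using ck
    by (intro exI[of _ "\<lambda>i. f (c i)"] exI[of _ k]) simp
qed


lemma small_inv: "e > 0 \<Longrightarrow> \<exists>N. \<forall>n\<ge>N. 1 / real (Suc n) < e"
proof -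
  assume e: "e > 0"
  obtain N :: nat where N: "N > 0" "inverse (real N) < e" using ex_inverse_of_nat_less[OF e] by auto
  show ?thesis
  proof (intro exI allI impI)
    fix n assume "N \<le> n"
    then have "real N \<le> real (Suc n)" by simp
    then have "1 / real (Suc n) \<le> 1 / real N" using N(1) by (intro divide_left_mono) auto
    then show "1 / real (Suc n) < e" using N(2) by (simp add: inverse_eq_divide)
  qed
qed

lemma inv_mono_suc: "n \<le> m \<Longrightarrow> 1 / real (Suc m) \<le> 1 / real (Suc n)"
  by (intro divide_left_mono) auto

lemma pigeon:
  fixes q :: "nat \<Rightarrow> 'a::metric_space"
  assumes "compact X" "\<And>j. q j \<in> X" "e > 0"
  shows "\<exists>j1 j2. j1 < j2 \<and> dist (q j1) (q j2) < e"
proof -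
  obtain l r where lr: "l \<in> X" "strict_mono (r :: nat \<Rightarrow> nat)" "(q \<circ> r) \<longlonglongrightarrow> l"
    using seq_compactE[of X q] assms(1,2) unfolding compact_eq_seq_compact_metric by metis
  have "eventually (\<lambda>n. dist ((q \<circ> r) n) l < e/2) sequentially"
    using tendsto_iff[THEN iffD1, OF lr(3), rule_format, of "e/2"] assms(3) by simp
  then obtain N where N: "\<And>n. n \<ge> N \<Longrightarrow> dist (q (r n)) l < e/2"
    unfolding eventually_sequentially by auto
  have "r N < r (Suc N)" using lr(2) unfolding strict_mono_def by auto
  moreover have "dist (q (r N)) (q (r (Suc N))) < e"
    using N[of N] N[of "Suc N"] dist_triangle2[of "q (r N)" "q (r (Suc N))" l] by auto
  ultimately show ?thesis by blast
qed

lemma CR_pre: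
  assumes "compact X" "continuous_on X f" "f ` X \<subseteq> X" "x \<in> chain_recurrent_set X f"
  shows "\<exists>u\<in>chain_recurrent_set X f. f u = x"
proof -
  have "\<forall>n. \<exists>c k. delta_chain X f (1 / real (Suc n)) c k \<and> c 0 = x \<and> c k = x"
    using assms(4) unfolding CR_iff reach_def by auto
  then obtain C K where CK: "\<And>n. delta_chain X f (1 / real (Suc n)) (C n) (K n) \<and> C n 0 = x \<and> C n (K n) = x"
    by metis
  define v where "v n = C n (K n - 1)" for n
  have K1: "1 \<le> K n" for n using CK[of n] unfolding delta_chain_def by auto
  have vX: "v n \<in> X" for n using CK[of n] unfolding delta_chain_def v_def by auto
  have vd: "dist (f (v n)) x \<le> 1 / real (Suc n)" for n
  proof -
    have "K n - 1 < K n" "Suc (K n - 1) = K n" using K1[of n] by auto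
    then show ?thesis using CK[of n] unfolding delta_chain_def v_def by metis
  qed
  obtain u r where ur: "u \<in> X" "strict_mono (r :: nat \<Rightarrow> nat)" "(v \<circ> r) \<longlonglongrightarrow> u"
    using seq_compactE[of X v] assms(1) vX unfolding compact_eq_seq_compact_metric by metis
  have lim1: "(\<lambda>n. f ((v \<circ> r) n)) \<longlonglongrightarrow> f u"
    by (rule continuous_on_tendsto_compose[OF assms(2) ur(3) ur(1)]) (use vX in auto)
  have fu: "f u = x"
  proof (rule ccontr)
    assume "f u \<noteq> x"
    then have pos: "dist x (f u) > 0" by simp
    obtain N where N: "\<forall>n\<ge>N. 1 / real (Suc n) < dist x (f u) / 2"
      using small_inv[of "dist x (f u) / 2"] pos by auto
    have "eventually (\<lambda>n. dist x (f ((v \<circ> r) n)) \<le> dist x (f u) / 2) sequentially"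
      unfolding eventually_sequentially
    proof (intro exI allI impI)
      fix n assume "n \<ge> N"
      then have "r n \<ge> N" using seq_suble[OF ur(2), of n] by linarith
      then have a: "1 / real (Suc (r n)) < dist x (f u) / 2" using N by auto
      have b: "dist x (f (v (r n))) \<le> 1 / real (Suc (r n))" using vd[of "r n"] by (simp add: dist_commute)
      show "dist x (f ((v \<circ> r) n)) \<le> dist x (f u) / 2" using a b by simp
    qed
    then have "dist x (f u) \<le> dist x (f u) / 2"
      by (rule Lim_dist_ubound[OF trivial_limit_sequentially lim1])
    then show False using pos by linarith
  qed
  have "u \<in> chain_recurrent_set X f"
  proof (rule CR_crit[OF assms(1,2) ur(1)])
    fix g b :: real assume g: "g > 0" and b: "b > 0"
    have "eventually (\<lambda>n. dist ((v \<circ> r) n) u < b) sequentially"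
      using ur(3) b unfolding tendsto_iff by auto
    then obtain N1 where N1: "\<And>n. n \<ge> N1 \<Longrightarrow> dist (v (r n)) u < b"
      unfolding eventually_sequentially by auto
    obtain N2 where N2: "\<forall>n\<ge>N2. 1 / real (Suc n) < g" using small_inv[OF g] by auto
    define n where "n = r (max N1 N2)"
    have n1: "dist (v n) u < b" using N1 n_def by auto
    have "n \<ge> N2" using seq_suble[OF ur(2), of "max N1 N2"] n_def by auto
    then have n2: "1 / real (Suc n) < g" using N2 by auto
    define c where "c i = (if i = 0 then v n else C n (i - 1))" for i
    have ch: "delta_chain X f g c (K n)"
      unfolding delta_chain_def
    proof (intro conjI allI impI)
      show "1 \<le> K n" by (rule K1)
    next
      fix i assume "i \<le> K n" then show "c i \<in> X"
        using CK[of n] vX[of n] unfolding c_def delta_chain_def by auto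
    next
      fix i assume i: "i < K n"
      show "dist (f (c i)) (c (Suc i)) \<le> g"
      proof (cases "i = 0")
        case True
        then show ?thesis using vd[of n] n2 CK[of n] by (simp add: c_def)
      next
        case False
        then have "i - 1 < K n" "Suc (i - 1) = i" using i by auto
        then have "dist (f (C n (i - 1))) (C n i) \<le> 1 / real (Suc n)"
          using CK[of n] unfolding delta_chain_def by metis
        then show ?thesis using False n2 by (simp add: c_def)
      qed
    qed
    have "c (K n) = v n" using K1[of n] by (simp add: c_def v_def)
    then show "\<exists>c k. delta_chain X f g c k \<and> dist (c 0) u \<le> b \<and> dist (c k) u \<le> b"
      using ch n1 by (intro exI[of _ c] exI[of _ "K n"]) (simp add: c_def)
  qed
  then show ?thesis using fu by blast
qed

lemma CR_return:
  assumes "compact X" "continuous_on X f" "f ` X \<subseteq> X"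
    "a \<in> chain_recurrent_set X f" "b \<in> chain_recurrent_set X f" "dist (f a) b \<le> d" "d > 0"
  shows "reach X f d b a"
proof -
  obtain u where u: "u \<in> chain_recurrent_set X f" "f u = b" using CR_pre[OF assms(1-3,5)] by blast
  have 1: "reach X f d b u" using CR_shift[OF assms(1-3) u(1) assms(7)] u(2) by simp
  have uX: "u \<in> X" "a \<in> X" using u(1) assms(4) CR_sub by auto
  have 2: "reach X f d u (f a)"
    by (rule reach_step) (use uX assms(3,6) u(2) in \<open>auto simp: dist_commute\<close>)
  have 3: "reach X f d (f a) a" using CR_shift[OF assms(1-4,7)] .
  show ?thesis using reach_trans[OF reach_trans[OF 1 2] 3] .
qed


lemma CR_lip:
  assumes "compact X" "continuous_on X f" "f ` X \<subseteq> X" "lipschitz_shadowing X f L"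
  shows "lipschitz_shadowing (chain_recurrent_set X f) f L"
proof -
  let ?CR = "chain_recurrent_set X f"
  obtain d0 where d0: "d0 > 0"
    and SH: "\<And>d xs. 0 < d \<Longrightarrow> d \<le> d0 \<Longrightarrow> pseudo_orbit X f d xs \<Longrightarrow> \<exists>y. shadows X f (L * d) xs y"
    using assms(4) unfolding lipschitz_shadowing_def by blast
  show ?thesis unfolding lipschitz_shadowing_def
  proof (intro exI[of _ d0] conjI allI impI)
    show "d0 > 0" by fact
    fix d xs assume dd: "0 < d \<and> d \<le> d0" and po: "pseudo_orbit ?CR f d xs"
    have xsCR: "xs i \<in> ?CR" for i using po unfolding pseudo_orbit_def by auto
    have xsX: "xs i \<in> X" for i using xsCR CR_sub by blast
    have stp: "dist (f (xs i)) (xs (Suc i)) \<le> d" for i using po unfolding pseudo_orbit_def by auto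
    have ret: "reach X f d (xs n) (xs 0)" for n
    proof (induction n)
      case 0 then show ?case using xsCR[of 0] dd CR_iff by blast
    next
      case (Suc n)
      have "reach X f d (xs (Suc n)) (xs n)"
        by (rule CR_return[OF assms(1-3) xsCR xsCR stp]) (use dd in auto)
      then show ?case using Suc reach_trans by blast
    qed
    have key: "\<exists>v m. v \<in> X \<and> 1 \<le> m \<and> (\<forall>i\<le>n. dist ((f ^^ i) v) (xs i) \<le> L * d)
                 \<and> dist ((f ^^ m) v) v < 1 / real (Suc n)" for n
    proof -
      obtain R k where R: "delta_chain X f d R k" "R 0 = xs n" "R k = xs 0"
        using ret[of n] unfolding reach_def by blast
      define C where "C i = (if i \<le> n then xs i else R (i - n))" for i
      define T where "T = n + k"
      have k1: "1 \<le> k" using R(1) unfolding delta_chain_def by auto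
      have Tn: "n < T" using k1 T_def by auto
      have CX: "C i \<in> X" if "i \<le> T" for i
        using R(1) xsX that unfolding C_def T_def delta_chain_def by auto
      have Cstep: "dist (f (C i)) (C (Suc i)) \<le> d" if "i < T" for i
      proof -
        consider "i < n" | "i = n" | "i > n" by linarith
        then show ?thesis
        proof cases
          case 1 then show ?thesis using stp by (simp add: C_def)
        next
          case 2
          have "dist (f (R 0)) (R 1) \<le> d" using R(1) k1 unfolding delta_chain_def by auto
          then show ?thesis using 2 R(2) by (simp add: C_def)
        next
          case 3
          then have "i - n < k" "Suc i - n = Suc (i - n)" using that T_def by auto
          then show ?thesis using 3 R(1) unfolding delta_chain_def by (simp add: C_def)
        qed
      qed
      have C0: "C 0 = C T" using R(3) Tn by (simp add: C_def T_def)
      define P where "P i = C (i mod T)" for i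
      have Tpos: "T > 0" using Tn by auto
      have poP: "pseudo_orbit X f d P"
        unfolding pseudo_orbit_def
      proof (intro conjI allI)
        fix i show "P i \<in> X" using CX Tpos unfolding P_def by (simp add: less_imp_le)
      next
        fix i
        have j: "i mod T < T" using Tpos by simp
        have "P (Suc i) = C (Suc (i mod T))"
          unfolding P_def mod_Suc using C0 by auto
        then show "dist (f (P i)) (P (Suc i)) \<le> d" using Cstep[OF j] by (simp add: P_def)
      qed
      obtain p where p: "shadows X f (L * d) P p" using SH[of d P] dd poP by blast
      have pX: "p \<in> X" and psh: "\<And>i. dist ((f ^^ i) p) (P i) \<le> L * d"
        using p unfolding shadows_def by auto
      define q where "q j = (f ^^ (j * T)) p" for j
      have qX: "q j \<in> X" for j using funpow_in[OF assms(3) pX] q_def by simp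
      have qsh: "dist ((f ^^ i) (q j)) (xs i) \<le> L * d" if "i \<le> n" for i j
      proof -
        have "(f ^^ i) (q j) = (f ^^ (i + j * T)) p" by (simp add: q_def funpow_add)
        moreover have "P (i + j * T) = xs i" using that Tn by (simp add: P_def C_def)
        ultimately show ?thesis using psh[of "i + j * T"] by simp
      qed
      obtain j1 j2 where j12: "j1 < j2" "dist (q j1) (q j2) < 1 / real (Suc n)"
        using pigeon[OF assms(1), of q "1 / real (Suc n)"] qX by auto
      define m where "m = (j2 - j1) * T"
      have m1: "1 \<le> m" using j12(1) Tpos by (simp add: m_def)
      have "j1 * T \<le> j2 * T" using j12(1) by simp
      then have "m + j1 * T = j2 * T" unfolding m_def by (simp add: diff_mult_distrib)
      moreover have "(f ^^ m) (q j1) = (f ^^ (m + j1 * T)) p" by (simp add: q_def funpow_add)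
      ultimately have "(f ^^ m) (q j1) = q j2" by (simp add: q_def)
      then show ?thesis using qX[of j1] m1 qsh j12(2)
        by (intro exI[of _ "q j1"] exI[of _ m]) (auto simp: dist_commute)
    qed
    then obtain V M where VM: "\<And>n. V n \<in> X \<and> 1 \<le> M n \<and> (\<forall>i\<le>n. dist ((f ^^ i) (V n)) (xs i) \<le> L * d)
                 \<and> dist ((f ^^ M n) (V n)) (V n) < 1 / real (Suc n)"
      by metis
    obtain z r where zr: "z \<in> X" "strict_mono (r :: nat \<Rightarrow> nat)" "(V \<circ> r) \<longlonglongrightarrow> z"
      using seq_compactE[of X V] assms(1) VM unfolding compact_eq_seq_compact_metric by metis
    have zCR: "z \<in> ?CR"
    proof (rule CR_crit[OF assms(1,2) zr(1)])
      fix g b :: real assume g: "g > 0" and b: "b > 0"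
      have "eventually (\<lambda>n. dist ((V \<circ> r) n) z < b/2) sequentially"
        using tendsto_iff[THEN iffD1, OF zr(3), rule_format, of "b/2"] b by simp
      then obtain N1 where N1: "\<And>n. n \<ge> N1 \<Longrightarrow> dist (V (r n)) z < b/2"
        unfolding eventually_sequentially by auto
      obtain N2 where N2: "\<forall>n\<ge>N2. 1 / real (Suc n) < b/2" using small_inv[of "b/2"] b by auto
      define n where "n = r (max N1 N2)"
      have n1: "dist (V n) z < b/2" using N1 n_def by auto
      have "n \<ge> N2" using seq_suble[OF zr(2), of "max N1 N2"] n_def by auto
      then have n2: "1 / real (Suc n) < b/2" using N2 by auto
      define c where "c i = (f ^^ i) (V n)" for i
      have ch: "delta_chain X f g c (M n)"
        unfolding delta_chain_def c_def
        using VM[of n] g funpow_in[OF assms(3)] by auto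
      have "dist (c (M n)) z \<le> dist (c (M n)) (V n) + dist (V n) z" by (rule dist_triangle)
      then have "dist (c (M n)) z \<le> b" using VM[of n] n1 n2 unfolding c_def by linarith
      moreover have "dist (V n) z \<le> b" using n1 zero_le_dist[of "V n" z] by linarith
      ultimately show "\<exists>c k. delta_chain X f g c k \<and> dist (c 0) z \<le> b \<and> dist (c k) z \<le> b"
        using ch by (intro exI[of _ c] exI[of _ "M n"]) (simp add: c_def)
    qed
    have zsh: "dist ((f ^^ i) z) (xs i) \<le> L * d" for i
    proof -
      have lim: "(\<lambda>n. (f ^^ i) ((V \<circ> r) n)) \<longlonglongrightarrow> (f ^^ i) z"
        by (rule continuous_on_tendsto_compose[OF funpow_cont[OF assms(3,2)] zr(3) zr(1)]) (use VM in auto)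
      have "eventually (\<lambda>n. dist (xs i) ((f ^^ i) ((V \<circ> r) n)) \<le> L * d) sequentially"
        unfolding eventually_sequentially
      proof (intro exI[of _ i] allI impI)
        fix n assume "i \<le> n"
        then have "i \<le> r n" using seq_suble[OF zr(2), of n] by linarith
        then show "dist (xs i) ((f ^^ i) ((V \<circ> r) n)) \<le> L * d"
          using VM[of "r n"] by (simp add: dist_commute)
      qed
      then have "dist (xs i) ((f ^^ i) z) \<le> L * d"
        by (rule Lim_dist_ubound[OF trivial_limit_sequentially lim])
      then show ?thesis by (simp add: dist_commute)
    qed
    show "\<exists>y. shadows ?CR f (L * d) xs y"
      using zCR zsh unfolding shadows_def by blast
  qed
qed

theorem theorem1p7:
  fixes X :: "'a::metric_space set" and f :: "'a \<Rightarrow> 'a" and L :: real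
  assumes "compact X"
    and "L > 0"
    and "continuous_on X f"
    and "f ` X \<subseteq> X"
    and "lipschitz_shadowing X f L"
  shows "f ` chain_recurrent_set X f = chain_recurrent_set X f
         \<and> lipschitz_shadowing (chain_recurrent_set X f) f L"
proof
  show "f ` chain_recurrent_set X f = chain_recurrent_set X f"
  proof
    show "f ` chain_recurrent_set X f \<subseteq> chain_recurrent_set X f"
      using CR_fwd[OF assms(1,3,4)] by blast
    show "chain_recurrent_set X f \<subseteq> f ` chain_recurrent_set X f"
      using CR_pre[OF assms(1,3,4)] by (metis image_eqI subsetI)
  qed
  show "lipschitz_shadowing (chain_recurrent_set X f) f L"
    by (rule CR_lip[OF assms(1,3,4,5)])
qed

end
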